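(* In the virtually-$\mathbb{Z}$ setting described in the context, let $\Phi:A^G\to A^G$ be a cellular automaton with neighborhood $S$ and local map $\mu$, and let $\Delta=\max\{\mathrm{imp}(s):s\in S\}$. Let $V=V_{[a,b]}$ be a section with $l(V)\geq\Delta$ and let $u\in A^L$ be a $V$-blocking word. Then for all $x,y\in A^G$ with $x|_L=y|_L=u$ and $x|_{Br_+(V)}=y|_{Br_+(V)}$, one has $\Phi^t(x)|_{Br_+(V)}=\Phi^t(y)|_{Br_+(V)}$ for all $t\in\mathbb{N}$. Symmetrically, for all $x,y\in A^G$ with $x|_L=y|_L=u$ and $x|_{Br_-(V)}=y|_{Br_-(V)}$, one has $\Phi^t(x)|_{Br_-(V)}=\Phi^t(y)|_{Br_-(V)}$ for all $t\in\mathbb{N}$.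
   Context: $G$ is a finitely generated group, $A$ a finite alphabet, $H\leq G$ a subgroup of finite index and $\varphi:H\to\mathbb{Z}$ a group isomorphism. $F\subseteq G$ is a finite set with $1_G\in F$ containing exactly one element of each right coset $Hg$, so every $g\in G$ decomposes uniquely as $g=zf$ with $z\in H$, $f\in F$. Define $p:G\to\mathbb{Z}$ by $p(zf)=\varphi(z)$. For $X\subseteq\mathbb{Z}$, $V_X=p^{-1}(X)$; $V_{\{k\}}$ is the $k$-th vertebra; $V_X$ is a section if $X=[a,b]$ is a finite integer interval, with length $l(V_{[a,b]})=b-a+1$, right arm $Br_+(V_{[a,b]})=V_{(b,\infty)}$ and left arm $Br_-(V_{[a,b]})=V_{(-\infty,a)}$ (integer intervals). For $s\in G$, $\mathrm{imp}(s)=\max\{|p(gs)-p(g)|:g\in V_{\{k\}}\}$, which is independent of $k$. A cellular automaton $\Phi$ with neighborhood $S\subseteq G$ finite and local map $\mu:A^S\to A$ is $\Phi(x)(g)=\mu(s\mapsto x(gs))$. For finite $V\subseteq G$, a pattern $u\in A^L$ ($L\subseteq G$ finite) is $V$-blocking for $\Phi$ if for all $x,y\in A^G$ with $x|_L=y|_L=u$ one has $\Phi^t(x)|_V=\Phi^t(y)|_V$ for all $t\in\mathbb{N}$. *)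

theory Defs
  imports "HOL-Algebra.Algebra"
begin

definition vz_proj :: "('g, 'b) monoid_scheme \<Rightarrow> 'g set \<Rightarrow> ('g \<Rightarrow> int) \<Rightarrow> 'g set \<Rightarrow> 'g \<Rightarrow> int" where
  "vz_proj Gr H \<phi> F g = \<phi> (THE z. z \<in> H \<and> (\<exists>f\<in>F. g = z \<otimes>\<^bsub>Gr\<^esub> f))"

definition vz_V :: "('g, 'b) monoid_scheme \<Rightarrow> 'g set \<Rightarrow> ('g \<Rightarrow> int) \<Rightarrow> 'g set \<Rightarrow> int set \<Rightarrow> 'g set" where
  "vz_V Gr H \<phi> F XX = {g \<in> carrier Gr. vz_proj Gr H \<phi> F g \<in> XX}"

text \<open>imp(s), computed on the vertebra V_{0} (independent of k by the paper).\<close>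
definition vz_imp :: "('g, 'b) monoid_scheme \<Rightarrow> 'g set \<Rightarrow> ('g \<Rightarrow> int) \<Rightarrow> 'g set \<Rightarrow> 'g \<Rightarrow> int" where
  "vz_imp Gr H \<phi> F s = Max {\<bar>vz_proj Gr H \<phi> F (g \<otimes>\<^bsub>Gr\<^esub> s) - vz_proj Gr H \<phi> F g\<bar> | g. g \<in> vz_V Gr H \<phi> F {0}}"

definition CA :: "('g, 'b) monoid_scheme \<Rightarrow> 'g set \<Rightarrow> (('g \<Rightarrow> 'a) \<Rightarrow> 'a) \<Rightarrow> ('g \<Rightarrow> 'a) \<Rightarrow> ('g \<Rightarrow> 'a)" where
  "CA Gr S \<mu> x = (\<lambda>g. \<mu> (\<lambda>s. if s \<in> S then x (g \<otimes>\<^bsub>Gr\<^esub> s) else undefined))"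

definition blocking :: "(('g \<Rightarrow> 'a) \<Rightarrow> ('g \<Rightarrow> 'a)) \<Rightarrow> 'g set \<Rightarrow> 'g set \<Rightarrow> ('g \<Rightarrow> 'a) \<Rightarrow> bool" where
  "blocking \<Phi> V L u \<longleftrightarrow> (\<forall>x y. (\<forall>g\<in>L. x g = u g \<and> y g = u g) \<longrightarrow>
      (\<forall>t::nat. \<forall>g\<in>V. (\<Phi> ^^ t) x g = (\<Phi> ^^ t) y g))"

end

theory Submission
  imports Defs
begin

lemma phi_mult:
  fixes G (structure)
  assumes iso: "\<phi> \<in> iso (G\<lparr>carrier := H\<rparr>) integer_group"
    and "z \<in> H" "w \<in> H"
  shows "\<phi> (z \<otimes> w) = \<phi> z + \<phi> w"
proof -
  have "\<phi> \<in> hom (G\<lparr>carrier := H\<rparr>) integer_group" using iso by (simp add: iso_def)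
  then show ?thesis using assms(2,3) unfolding hom_def by simp
qed

lemma phi_inj:
  fixes G (structure)
  assumes iso: "\<phi> \<in> iso (G\<lparr>carrier := H\<rparr>) integer_group"
  shows "inj_on \<phi> H"
  using iso unfolding iso_def bij_betw_def by simp

lemma decomp_unique:
  fixes G (structure)
  assumes grp: "group G" and sub: "subgroup H G" and F_sub: "F \<subseteq> carrier G"
    and F_trans: "\<forall>g\<in>carrier G. \<exists>!f. f \<in> F \<and> f \<in> H #> g"
    and z: "z \<in> H" "f \<in> F" "z' \<in> H" "f' \<in> F" and eq: "z \<otimes> f = z' \<otimes> f'"
  shows "z = z' \<and> f = f'"
proof -
  interpret group G by (rule grp)
  have c: "z \<in> carrier G" "z' \<in> carrier G" "f \<in> carrier G" "f' \<in> carrier G"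
    using z F_sub subgroup.mem_carrier[OF sub] by auto
  have "inv z' \<otimes> (z \<otimes> f) = inv z' \<otimes> (z' \<otimes> f')" using eq by simp
  also have "\<dots> = f'" using c by (simp add: m_assoc[symmetric])
  finally have "f' = (inv z' \<otimes> z) \<otimes> f" using c by (simp add: m_assoc)
  moreover have "inv z' \<otimes> z \<in> H"
    using z subgroup.m_closed[OF sub] subgroup.m_inv_closed[OF sub] by blast
  ultimately have "f' \<in> H #> f" using rcosI[OF _ subgroup.subset[OF sub] c(3)] by simp
  moreover have "f \<in> H #> f" using rcos_self[OF c(3) sub] .
  moreover have "\<exists>!f''. f'' \<in> F \<and> f'' \<in> H #> f" using F_trans c(3) by blast
  ultimately have ff: "f = f'" using z by blast
  then have "z \<otimes> f = z' \<otimes> f" using eq by simp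
  then have "z = z'" using r_cancel c by blast
  then show ?thesis using ff by simp
qed

lemma decomp_exists:
  fixes G (structure)
  assumes grp: "group G" and sub: "subgroup H G" and F_sub: "F \<subseteq> carrier G"
    and F_trans: "\<forall>g\<in>carrier G. \<exists>!f. f \<in> F \<and> f \<in> H #> g"
    and g: "g \<in> carrier G"
  shows "\<exists>z f. z \<in> H \<and> f \<in> F \<and> g = z \<otimes> f"
proof -
  interpret group G by (rule grp)
  obtain f where f: "f \<in> F" "f \<in> H #> g" using F_trans g by blast
  then obtain h where h: "h \<in> H" "f = h \<otimes> g" unfolding r_coset_def by auto
  have hc: "h \<in> carrier G" using h subgroup.mem_carrier[OF sub] by auto
  have "g = inv h \<otimes> f" using h hc g by (simp add: inv_solve_left)
  moreover have "inv h \<in> H" using h sub subgroup.m_inv_closed by metis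
  ultimately show ?thesis using f by blast
qed

lemma proj_eq:
  fixes G (structure)
  assumes grp: "group G" and sub: "subgroup H G" and F_sub: "F \<subseteq> carrier G"
    and F_trans: "\<forall>g\<in>carrier G. \<exists>!f. f \<in> F \<and> f \<in> H #> g"
    and z: "z \<in> H" "f \<in> F"
  shows "vz_proj G H \<phi> F (z \<otimes> f) = \<phi> z"
proof -
  have "(THE w. w \<in> H \<and> (\<exists>f'\<in>F. z \<otimes> f = w \<otimes> f')) = z"
    apply (rule the_equality)
    using z apply blast
    using decomp_unique[OF grp sub F_sub F_trans] z by metis
  then show ?thesis unfolding vz_proj_def by simp
qed

lemma imp_bound:
  fixes G (structure)
  assumes grp: "group G" and sub: "subgroup H G" and F_sub: "F \<subseteq> carrier G"
    and F_fin: "finite F"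
    and F_trans: "\<forall>g\<in>carrier G. \<exists>!f. f \<in> F \<and> f \<in> H #> g"
    and iso: "\<phi> \<in> iso (G\<lparr>carrier := H\<rparr>) integer_group"
    and g: "g \<in> carrier G" and s: "s \<in> carrier G"
  shows "\<bar>vz_proj G H \<phi> F (g \<otimes> s) - vz_proj G H \<phi> F g\<bar> \<le> vz_imp G H \<phi> F s"
proof -
  interpret group G by (rule grp)
  let ?p = "vz_proj G H \<phi> F"
  have one: "\<phi> \<one> = 0"
  proof -
    have "\<phi> (\<one> \<otimes> \<one>) = \<phi> \<one> + \<phi> \<one>"
      using phi_mult[OF iso] subgroup.one_closed[OF sub] by blast
    then show ?thesis by simp
  qed
  obtain z f where zf: "z \<in> H" "f \<in> F" "g = z \<otimes> f"
    using decomp_exists[OF grp sub F_sub F_trans g] by blast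
  have zc: "z \<in> carrier G" "f \<in> carrier G" using zf F_sub subgroup.mem_carrier[OF sub] by auto
  obtain z1 f1 where zf1: "z1 \<in> H" "f1 \<in> F" "f \<otimes> s = z1 \<otimes> f1"
    using decomp_exists[OF grp sub F_sub F_trans, of "f \<otimes> s"] zc s by blast
  have z1c: "z1 \<in> carrier G" "f1 \<in> carrier G" using zf1 F_sub subgroup.mem_carrier[OF sub] by auto
  have gs: "g \<otimes> s = (z \<otimes> z1) \<otimes> f1" using zf zf1 zc z1c s by (simp add: m_assoc)
  have zz1: "z \<otimes> z1 \<in> H" using zf zf1 sub subgroup.m_closed by metis
  have pgs: "?p (g \<otimes> s) = \<phi> z + \<phi> z1"
    using gs proj_eq[OF grp sub F_sub F_trans zz1 zf1(2)] phi_mult[OF iso zf(1) zf1(1)] by simp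
  have pg: "?p g = \<phi> z" using proj_eq[OF grp sub F_sub F_trans zf(1,2)] zf by simp
  have pf: "?p f = 0"
    using proj_eq[OF grp sub F_sub F_trans subgroup.one_closed[OF sub] zf(2)] zc one by simp
  have pfs: "?p (f \<otimes> s) = \<phi> z1" using proj_eq[OF grp sub F_sub F_trans zf1(1,2)] zf1 by simp
  have V0: "vz_V G H \<phi> F {0} \<subseteq> F"
  proof
    fix h assume "h \<in> vz_V G H \<phi> F {0}"
    then have h: "h \<in> carrier G" "?p h = 0" unfolding vz_V_def by auto
    obtain z2 f2 where zf2: "z2 \<in> H" "f2 \<in> F" "h = z2 \<otimes> f2"
      using decomp_exists[OF grp sub F_sub F_trans h(1)] by blast
    have "\<phi> z2 = \<phi> \<one>" using h proj_eq[OF grp sub F_sub F_trans zf2(1,2)] zf2 one by simp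
    then have "z2 = \<one>" using phi_inj[OF iso] zf2(1) subgroup.one_closed[OF sub]
      by (meson inj_onD)
    then show "h \<in> F" using zf2 F_sub by auto
  qed
  have fV: "f \<in> vz_V G H \<phi> F {0}" unfolding vz_V_def using zc pf by simp
  have fin: "finite {\<bar>?p (h \<otimes> s) - ?p h\<bar> | h. h \<in> vz_V G H \<phi> F {0}}"
    using finite_subset[OF V0 F_fin] by simp
  have "\<bar>?p (f \<otimes> s) - ?p f\<bar> \<le> vz_imp G H \<phi> F s"
    unfolding vz_imp_def by (rule Max_ge[OF fin]) (use fV in blast)
  then show ?thesis using pgs pg pf pfs by simp
qed

theorem lemma3:
  fixes G :: "('g, 'b) monoid_scheme" (structure)
    and H F S L :: "'g set"
    and \<phi> :: "'g \<Rightarrow> int"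
    and \<mu> :: "('g \<Rightarrow> 'a::finite) \<Rightarrow> 'a"
    and u :: "'g \<Rightarrow> 'a"
    and a b :: int
  assumes grp: "group G"
    and fg: "\<exists>K. finite K \<and> K \<subseteq> carrier G \<and> generate G K = carrier G"
    and sub: "subgroup H G"
    and findex: "finite (rcosets H)"
    and iso: "\<phi> \<in> iso (G\<lparr>carrier := H\<rparr>) integer_group"
    and F_sub: "F \<subseteq> carrier G" and F_fin: "finite F" and F_one: "\<one> \<in> F"
    and F_trans: "\<forall>g\<in>carrier G. \<exists>!f. f \<in> F \<and> f \<in> H #> g"
    and S_sub: "S \<subseteq> carrier G" and S_fin: "finite S"
    and ab: "a \<le> b"
    and len: "b - a + 1 \<ge> Max (insert 0 (vz_imp G H \<phi> F ` S))"
    and L_sub: "L \<subseteq> carrier G" and L_fin: "finite L"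
    and blk: "blocking (CA G S \<mu>) (vz_V G H \<phi> F {a..b}) L u"
  shows "(\<forall>x y. (\<forall>g\<in>L. x g = u g \<and> y g = u g) \<and>
            (\<forall>g\<in>vz_V G H \<phi> F {b<..}. x g = y g) \<longrightarrow>
            (\<forall>t::nat. \<forall>g\<in>vz_V G H \<phi> F {b<..}. (CA G S \<mu> ^^ t) x g = (CA G S \<mu> ^^ t) y g))
       \<and> (\<forall>x y. (\<forall>g\<in>L. x g = u g \<and> y g = u g) \<and>
            (\<forall>g\<in>vz_V G H \<phi> F {..<a}. x g = y g) \<longrightarrow>
            (\<forall>t::nat. \<forall>g\<in>vz_V G H \<phi> F {..<a}. (CA G S \<mu> ^^ t) x g = (CA G S \<mu> ^^ t) y g))"
proof -
  interpret group G by (rule grp)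
  let ?p = "vz_proj G H \<phi> F"
  let ?V = "vz_V G H \<phi> F"
  let ?C = "CA G S \<mu>"
  have bnd: "\<bar>?p (g \<otimes> s) - ?p g\<bar> \<le> b - a + 1" if "g \<in> carrier G" "s \<in> S" for g s
  proof -
    have "\<bar>?p (g \<otimes> s) - ?p g\<bar> \<le> vz_imp G H \<phi> F s"
      using imp_bound[OF grp sub F_sub F_fin F_trans iso that(1)] that S_sub by blast
    also have "\<dots> \<le> Max (insert 0 (vz_imp G H \<phi> F ` S))"
      using S_fin that(2) by (simp add: Max_ge_iff)
    finally show ?thesis using len by simp
  qed
  have step: "(?C ^^ Suc t) x g = (?C ^^ Suc t) y g"
    if "\<forall>s\<in>S. (?C ^^ t) x (g \<otimes> s) = (?C ^^ t) y (g \<otimes> s)" for t x y g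
    using that by (simp add: CA_def cong: if_cong)
  have blkV: "(?C ^^ t) x g = (?C ^^ t) y g"
    if "\<forall>g\<in>L. x g = u g \<and> y g = u g" "g \<in> ?V {a..b}" for t x y g
    using blk that unfolding blocking_def by blast
  have R: "\<forall>t::nat. \<forall>g\<in>?V {b<..}. (?C ^^ t) x g = (?C ^^ t) y g"
    if hL: "\<forall>g\<in>L. x g = u g \<and> y g = u g" and hR: "\<forall>g\<in>?V {b<..}. x g = y g" for x y
  proof -
    have "\<forall>g\<in>?V {a..}. (?C ^^ t) x g = (?C ^^ t) y g" for t
    proof (induction t)
      case 0
      show ?case
      proof
        fix g assume g: "g \<in> ?V {a..}"
        show "(?C ^^ 0) x g = (?C ^^ 0) y g"
        proof (cases "?p g \<le> b")
          case True
          then have "g \<in> ?V {a..b}" using g unfolding vz_V_def by auto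
          then show ?thesis using blkV[OF hL] by blast
        next
          case False
          then have "g \<in> ?V {b<..}" using g unfolding vz_V_def by auto
          then show ?thesis using hR by simp
        qed
      qed
    next
      case (Suc t)
      show ?case
      proof
        fix g assume g: "g \<in> ?V {a..}"
        show "(?C ^^ Suc t) x g = (?C ^^ Suc t) y g"
        proof (cases "?p g \<le> b")
          case True
          then have "g \<in> ?V {a..b}" using g unfolding vz_V_def by auto
          then show ?thesis using blkV[OF hL] by blast
        next
          case False
          have gc: "g \<in> carrier G" using g unfolding vz_V_def by auto
          show ?thesis
          proof (rule step, intro ballI)
            fix s assume s: "s \<in> S"
            have "g \<otimes> s \<in> ?V {a..}"
              using bnd[OF gc s] False gc s S_sub unfolding vz_V_def by auto
            then show "(?C ^^ t) x (g \<otimes> s) = (?C ^^ t) y (g \<otimes> s)" using Suc by blast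
          qed
        qed
      qed
    qed
    then show ?thesis using ab unfolding vz_V_def by force
  qed
  have Lft: "\<forall>t::nat. \<forall>g\<in>?V {..<a}. (?C ^^ t) x g = (?C ^^ t) y g"
    if hL: "\<forall>g\<in>L. x g = u g \<and> y g = u g" and hR: "\<forall>g\<in>?V {..<a}. x g = y g" for x y
  proof -
    have "\<forall>g\<in>?V {..b}. (?C ^^ t) x g = (?C ^^ t) y g" for t
    proof (induction t)
      case 0
      show ?case
      proof
        fix g assume g: "g \<in> ?V {..b}"
        show "(?C ^^ 0) x g = (?C ^^ 0) y g"
        proof (cases "a \<le> ?p g")
          case True
          then have "g \<in> ?V {a..b}" using g unfolding vz_V_def by auto
          then show ?thesis using blkV[OF hL] by blast
        next
          case False
          then have "g \<in> ?V {..<a}" using g unfolding vz_V_def by auto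
          then show ?thesis using hR by simp
        qed
      qed
    next
      case (Suc t)
      show ?case
      proof
        fix g assume g: "g \<in> ?V {..b}"
        show "(?C ^^ Suc t) x g = (?C ^^ Suc t) y g"
        proof (cases "a \<le> ?p g")
          case True
          then have "g \<in> ?V {a..b}" using g unfolding vz_V_def by auto
          then show ?thesis using blkV[OF hL] by blast
        next
          case False
          have gc: "g \<in> carrier G" using g unfolding vz_V_def by auto
          show ?thesis
          proof (rule step, intro ballI)
            fix s assume s: "s \<in> S"
            have "g \<otimes> s \<in> ?V {..b}"
              using bnd[OF gc s] False gc s S_sub unfolding vz_V_def by auto
            then show "(?C ^^ t) x (g \<otimes> s) = (?C ^^ t) y (g \<otimes> s)" using Suc by blast
          qed
        qed
      qed
    qed
    then show ?thesis using ab unfolding vz_V_def by force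
  qed
  show ?thesis using R Lft by blast
qed

end
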